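(* Let $X$ be a separable Banach space and let $C$ be a weak*-compact convex subset of $X^{**}$ with $C\cap X=\emptyset$. Then there is a nested sequence $(C_n)$ of closed convex subsets of $X$ such that $C\subset\bigcap_n\overline{C_n}^{w^*}$ and, for every $x\in X$, $$\mathrm{dist}(x,C)=\lim_{n\to\infty}\mathrm{dist}(x,C_n).$$
   Context: $X$ is regarded as a subspace of $X^{**}$ via the canonical embedding; $\overline{A}^{w^*}$ denotes the weak*-closure in $X^{**}$ of $A\subset X$; distances are computed with the norm of $X^{**}$ (which extends that of $X$). Nested means $C_{n+1}\subset C_n$ for all $n$. *)

theory Defs
  imports "HOL-Analysis.Analysis"
begin

text \<open>Dual of X: 'a \<Rightarrow>L real; bidual: ('a \<Rightarrow>L real) \<Rightarrow>L real.\<close>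

definition canon :: "'a::real_normed_vector \<Rightarrow> (('a \<Rightarrow>\<^sub>L real) \<Rightarrow>\<^sub>L real)" where
  "canon x = Blinfun (\<lambda>f. blinfun_apply f x)"

definition wstar :: "(('a::real_normed_vector \<Rightarrow>\<^sub>L real) \<Rightarrow>\<^sub>L real) topology" where
  "wstar = topology_generated_by {{\<phi>. blinfun_apply \<phi> f \<in> U} | f U. open U}"

definition separable_space :: "'a::metric_space itself \<Rightarrow> bool" where
  "separable_space _ \<longleftrightarrow> (\<exists>D::'a set. countable D \<and> closure D = UNIV)"

end

theory Submission
  imports Defs
begin


lemma two_fun:
  fixes u v :: "'y::real_vector \<Rightarrow> real"
  assumes Y: "convex Y"
    and au: "\<And>y1 y2 m. y1 \<in> Y \<Longrightarrow> y2 \<in> Y \<Longrightarrow> 0 \<le> m \<Longrightarrow> m \<le> 1 \<Longrightarrow>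
               u ((1-m) *\<^sub>R y1 + m *\<^sub>R y2) = (1-m) * u y1 + m * u y2"
    and av: "\<And>y1 y2 m. y1 \<in> Y \<Longrightarrow> y2 \<in> Y \<Longrightarrow> 0 \<le> m \<Longrightarrow> m \<le> 1 \<Longrightarrow>
               v ((1-m) *\<^sub>R y1 + m *\<^sub>R y2) = (1-m) * v y1 + m * v y2"
    and h: "\<And>m. 0 \<le> m \<Longrightarrow> m \<le> 1 \<Longrightarrow> \<exists>y\<in>Y. (1-m) * u y + m * v y < t"
  shows "\<exists>y\<in>Y. u y < t \<and> v y < t"
proof (rule ccontr)
  assume nn: "\<not> ?thesis"
  define K where "K = (\<lambda>y. (u y, v y)) ` Y"
  define Q where "Q = {p::real\<times>real. fst p < t \<and> snd p < t}"
  have cK: "convex K"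
    unfolding K_def convex_alt
  proof (intro ballI allI impI)
    fix p q and m :: real
    assume "p \<in> (\<lambda>y. (u y, v y)) ` Y" "q \<in> (\<lambda>y. (u y, v y)) ` Y" and m: "0 \<le> m \<and> m \<le> 1"
    then obtain y1 y2 where y: "y1 \<in> Y" "y2 \<in> Y" "p = (u y1, v y1)" "q = (u y2, v y2)" by auto
    have "(1-m) *\<^sub>R y1 + m *\<^sub>R y2 \<in> Y" using Y y m unfolding convex_alt by (metis add.commute)
    moreover have "(1 - m) *\<^sub>R p + m *\<^sub>R q = (\<lambda>y. (u y, v y)) ((1-m) *\<^sub>R y1 + m *\<^sub>R y2)"
      using y m au av by simp
    ultimately show "(1 - m) *\<^sub>R p + m *\<^sub>R q \<in> (\<lambda>y. (u y, v y)) ` Y" by blast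
  qed
  have cQ: "convex Q" unfolding Q_def convex_alt by (auto intro!: convex_bound_lt)
  have KQ: "K \<inter> Q = {}" using nn unfolding K_def Q_def by auto
  have Kne: "K \<noteq> {}" using h[of 0] unfolding K_def by auto
  have "(t-1,t-1) \<in> Q" unfolding Q_def by simp
  hence Qne: "Q \<noteq> {}" by blast
  obtain a b where a: "a \<noteq> 0" and aK: "\<forall>x\<in>K. inner a x \<le> b" and aQ: "\<forall>x\<in>Q. inner a x \<ge> b"
    using separating_hyperplane_sets[OF cK cQ Kne Qne KQ] by blast
  obtain a1 a2 where aa: "a = (a1, a2)" by fastforce
  have aQ': "\<And>q1 q2. q1 < t \<Longrightarrow> q2 < t \<Longrightarrow> a1 * q1 + a2 * q2 \<ge> b"
    using aQ unfolding Q_def aa by auto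
  have a1: "a1 \<le> 0"
  proof (rule ccontr)
    assume "\<not> a1 \<le> 0"
    hence "a1 > 0" by simp
    define N where "N = (\<bar>a1 * (t-1)\<bar> + \<bar>a2 * (t-1)\<bar> + \<bar>b\<bar> + 1) / a1"
    have "N \<ge> 0" using \<open>a1 > 0\<close> unfolding N_def by simp
    have "a1 * (t - 1 - N) + a2 * (t-1) \<ge> b" by (rule aQ') (use \<open>N \<ge> 0\<close> in auto)
    moreover have "a1 * N = \<bar>a1 * (t-1)\<bar> + \<bar>a2 * (t-1)\<bar> + \<bar>b\<bar> + 1"
      using \<open>a1 > 0\<close> unfolding N_def by simp
    ultimately show False by (simp add: algebra_simps) (smt (verit) abs_ge_self abs_ge_minus_self)?
  qed
  have a2: "a2 \<le> 0"
  proof (rule ccontr)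
    assume "\<not> a2 \<le> 0"
    hence "a2 > 0" by simp
    define N where "N = (\<bar>a1 * (t-1)\<bar> + \<bar>a2 * (t-1)\<bar> + \<bar>b\<bar> + 1) / a2"
    have "N \<ge> 0" using \<open>a2 > 0\<close> unfolding N_def by simp
    have "a1 * (t - 1) + a2 * (t-1-N) \<ge> b" by (rule aQ') (use \<open>N \<ge> 0\<close> in auto)
    moreover have "a2 * N = \<bar>a1 * (t-1)\<bar> + \<bar>a2 * (t-1)\<bar> + \<bar>b\<bar> + 1"
      using \<open>a2 > 0\<close> unfolding N_def by simp
    ultimately show False by (simp add: algebra_simps) (smt (verit) abs_ge_self abs_ge_minus_self)?
  qed
  define s where "s = -(a1 + a2)"
  have s: "s > 0" using a a1 a2 aa unfolding s_def by (auto simp: zero_prod_def)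
  have bt: "b \<le> -s * t"
  proof (rule ccontr)
    assume "\<not> b \<le> -s * t"
    define d where "d = (b + s * t) / (2 * s)"
    have "d > 0" using s \<open>\<not> b \<le> -s * t\<close> unfolding d_def by (simp add: field_simps)
    have "a1 * (t - d) + a2 * (t - d) \<ge> b" by (rule aQ') (use \<open>d > 0\<close> in auto)
    hence "-s * t + s * d \<ge> b" unfolding s_def by (simp add: algebra_simps)
    moreover have "s * d = (b + s*t)/2" using s unfolding d_def by simp
    ultimately show False using \<open>\<not> b \<le> -s * t\<close> by simp
  qed
  define m where "m = -a2 / s"
  have m: "0 \<le> m" "m \<le> 1" using s a1 a2 unfolding m_def s_def by (auto simp: field_simps)
  obtain y where y: "y \<in> Y" "(1-m) * u y + m * v y < t" using h[OF m] by blast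
  have "a1 * u y + a2 * v y \<le> b" using aK y(1) unfolding K_def aa by auto
  moreover have "(1-m) * u y + m * v y = -(a1 * u y + a2 * v y) / s"
  proof -
    have "1 - m = -a1 / s" using s unfolding m_def s_def by (simp add: field_simps)
    hence "(1-m) * u y + m * v y = (-a1/s) * u y + (-a2/s) * v y"
      unfolding m_def by simp
    also have "\<dots> = -(a1 * u y + a2 * v y) / s" using s by (simp add: field_simps)
    finally show ?thesis .
  qed
  ultimately have "(1-m) * u y + m * v y \<ge> -b / s" using s by (simp add: field_simps)
  moreover have "-b / s \<ge> t" using bt s by (simp add: field_simps)
  ultimately show False using y by simp
qed

lemma fin_minimax:
  fixes A :: "'g::real_vector \<Rightarrow> 'y::real_vector \<Rightarrow> real"
  assumes fin: "finite F"
    and affY: "\<And>g y1 y2 m. y1 \<in> Y \<Longrightarrow> y2 \<in> Y \<Longrightarrow> 0 \<le> m \<Longrightarrow> m \<le> 1 \<Longrightarrow>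
               A g ((1-m) *\<^sub>R y1 + m *\<^sub>R y2) = (1-m) * A g y1 + m * A g y2"
    and affG: "\<And>g1 g2 y m. A ((1-m) *\<^sub>R g1 + m *\<^sub>R g2) y = (1-m) * A g1 y + m * A g2 y"
  shows "convex Y \<Longrightarrow> Y \<noteq> {} \<Longrightarrow> (\<And>g. g \<in> convex hull F \<Longrightarrow> \<exists>y\<in>Y. A g y < t)
         \<Longrightarrow> \<exists>y\<in>Y. \<forall>f\<in>F. A f y < t"
  using fin affY
proof (induction F arbitrary: Y rule: finite_induct)
  case empty
  then show ?case by auto
next
  case (insert f F)
  define Y0 where "Y0 = {y\<in>Y. A f y < t}"
  have cY0: "convex Y0" unfolding Y0_def convex_alt
  proof (intro ballI allI impI)
    fix y1 y2 and m :: real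
    assume y: "y1 \<in> {y \<in> Y. A f y < t}" "y2 \<in> {y \<in> Y. A f y < t}" and m: "0 \<le> m \<and> m \<le> 1"
    have "(1-m) *\<^sub>R y1 + m *\<^sub>R y2 \<in> Y" using insert.prems(1) y m unfolding convex_alt by auto
    moreover have "A f ((1-m) *\<^sub>R y1 + m *\<^sub>R y2) < t"
      using insert.prems(4)[of y1 y2 m f] y m convex_bound_lt[of "A f y1" t "A f y2" "1-m" m] by auto
    ultimately show "(1 - m) *\<^sub>R y1 + m *\<^sub>R y2 \<in> {y \<in> Y. A f y < t}" by blast
  qed
  have fh: "f \<in> convex hull (insert f F)" by (simp add: hull_inc)
  have Y0ne: "Y0 \<noteq> {}" using insert.prems(3)[OF fh] unfolding Y0_def by auto
  have "\<exists>y\<in>Y0. A g y < t" if g: "g \<in> convex hull F" for g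
  proof -
    have gh: "g \<in> convex hull (insert f F)" using g hull_mono[of F "insert f F"] by blast
    have "\<exists>y\<in>Y. A g y < t \<and> A f y < t"
    proof (rule two_fun[of Y "A g" "A f"])
      show "convex Y" by fact
      show "\<And>y1 y2 m. y1 \<in> Y \<Longrightarrow> y2 \<in> Y \<Longrightarrow> 0 \<le> m \<Longrightarrow> m \<le> 1 \<Longrightarrow>
               A g ((1-m) *\<^sub>R y1 + m *\<^sub>R y2) = (1-m) * A g y1 + m * A g y2" using insert.prems(4) by blast
      show "\<And>y1 y2 m. y1 \<in> Y \<Longrightarrow> y2 \<in> Y \<Longrightarrow> 0 \<le> m \<Longrightarrow> m \<le> 1 \<Longrightarrow>
               A f ((1-m) *\<^sub>R y1 + m *\<^sub>R y2) = (1-m) * A f y1 + m * A f y2" using insert.prems(4) by blast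
      fix m :: real assume m: "0 \<le> m" "m \<le> 1"
      have "(1-m) *\<^sub>R g + m *\<^sub>R f \<in> convex hull (insert f F)"
        using convexD[OF convex_convex_hull gh fh, of "1-m" m] m by simp
      then obtain y where "y \<in> Y" "A ((1-m) *\<^sub>R g + m *\<^sub>R f) y < t" using insert.prems(3) by blast
      then show "\<exists>y\<in>Y. (1 - m) * A g y + m * A f y < t" using affG by auto
    qed
    then show ?thesis unfolding Y0_def by auto
  qed
  moreover have "\<And>g y1 y2 m. y1 \<in> Y0 \<Longrightarrow> y2 \<in> Y0 \<Longrightarrow> 0 \<le> m \<Longrightarrow> m \<le> 1 \<Longrightarrow>
               A g ((1-m) *\<^sub>R y1 + m *\<^sub>R y2) = (1-m) * A g y1 + m * A g y2"
    using insert.prems(4) unfolding Y0_def by blast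
  ultimately obtain y where "y \<in> Y0" "\<forall>f\<in>F. A f y < t"
    using insert.IH[OF cY0 Y0ne] by blast
  then show ?case unfolding Y0_def by auto
qed

lemma canon_apply [simp]: "blinfun_apply (canon x) f = blinfun_apply f x"
  unfolding canon_def
  by (subst bounded_linear_Blinfun_apply)
     (auto intro: bounded_bilinear.bounded_linear_left[OF bounded_bilinear_blinfun_apply])

lemma canon_diff: "canon x - canon y = canon (x - y)"
  by (rule blinfun_eqI) (simp add: blinfun.diff_right minus_blinfun.rep_eq)

lemma canon_add: "canon x + canon y = canon (x + y)"
  by (rule blinfun_eqI) (simp add: blinfun.add_right plus_blinfun.rep_eq)

lemma norm_canon_le: "norm (canon x) \<le> norm x"
  by (rule norm_blinfun_bound) (auto, metis norm_blinfun mult.commute real_norm_def)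

lemma apply_le: "\<bar>blinfun_apply c f\<bar> \<le> norm c * norm (f::'b::real_normed_vector)"
  using norm_blinfun[of c f] by simp

lemma helly:
  fixes c :: "('a::real_normed_vector \<Rightarrow>\<^sub>L real) \<Rightarrow>\<^sub>L real"
  assumes H: "finite H" and eta: "\<eta> > 0" and r: "norm c < r"
  shows "\<exists>y::'a. norm y < r \<and> (\<forall>h\<in>H. \<bar>blinfun_apply h y - blinfun_apply c h\<bar> < \<eta>)"
proof -
  define A where "A = (\<lambda>g (y::'a). blinfun_apply g y - blinfun_apply c g)"
  define F where "F = H \<union> uminus ` H"
  have r0: "r > 0" using r norm_ge_zero[of c] by linarith
  have key: "\<exists>y\<in>ball 0 r. A g y < \<eta>" for g
  proof (cases "g = 0")
    case True
    then show ?thesis using r0 eta unfolding A_def True by (intro bexI[of _ 0]) auto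
  next
    case False
    hence ng: "norm g > 0" by simp
    obtain \<rho> where rho: "norm c < \<rho>" "\<rho> < r" using r dense by blast
    have rho0: "\<rho> > 0" using rho norm_ge_zero[of c] by linarith
    define q where "q = norm c / \<rho> * norm g"
    have q0: "q \<ge> 0" unfolding q_def using rho0 by simp
    have qlt: "q < norm g" unfolding q_def using rho rho0 ng by (simp add: field_simps)
    obtain z where z: "\<bar>blinfun_apply g z\<bar> > q * norm z"
    proof (rule ccontr)
      assume "\<not> thesis"
      hence "\<And>z. norm (blinfun_apply g z) \<le> q * norm z" using that by (metis not_less real_norm_def)
      hence "norm g \<le> q" by (rule norm_blinfun_bound[OF q0])
      then show False using qlt by simp
    qed
    have z0: "z \<noteq> 0" using z q0 by (auto)
    hence nz: "norm z > 0" by simp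
    define y where "y = (- (\<rho> / norm z) * sgn (blinfun_apply g z)) *\<^sub>R z"
    have sg: "\<bar>sgn (blinfun_apply g z)\<bar> = 1" using z q0 nz
      by (metis abs_sgn_eq_1 abs_zero mult_nonneg_nonneg norm_ge_zero not_less)
    have ny: "norm y = \<rho>" unfolding y_def using nz rho0 sg by (simp add: abs_mult)
    have gy: "blinfun_apply g y = - (\<rho> / norm z) * \<bar>blinfun_apply g z\<bar>"
      proof -
      have e: "blinfun_apply g z * sgn (blinfun_apply g z) = \<bar>blinfun_apply g z\<bar>" by (metis abs_sgn)
      show ?thesis unfolding y_def blinfun.scaleR_right real_scaleR_def
        using e by (simp add: algebra_simps)
    qed
    have "\<rho> / norm z * \<bar>blinfun_apply g z\<bar> > \<rho> / norm z * (q * norm z)"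
      using z rho0 nz by (intro mult_strict_left_mono) auto
    also have "\<rho> / norm z * (q * norm z) = norm c * norm g" unfolding q_def using nz rho0 by simp
    finally have "blinfun_apply g y < - (norm c * norm g)" using gy by simp
    moreover have "- blinfun_apply c g \<le> norm c * norm g" using apply_le[of c g] by linarith
    ultimately have "A g y < 0" unfolding A_def by simp
    then show ?thesis using ny rho eta by (auto intro!: bexI[of _ y])
  qed
  have "\<exists>y\<in>ball 0 r. \<forall>f\<in>F. A f y < \<eta>"
  proof (rule fin_minimax[of F "ball 0 r" A])
    show "finite F" using H unfolding F_def by simp
    show "A g ((1-m) *\<^sub>R y1 + m *\<^sub>R y2) = (1-m) * A g y1 + m * A g y2" for g y1 y2 and m :: real
      unfolding A_def by (simp only: blinfun.add_right blinfun.scaleR_right real_scaleR_def) (simp add: algebra_simps)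
    show "A ((1-m) *\<^sub>R g1 + m *\<^sub>R g2) y = (1-m) * A g1 y + m * A g2 y" for g1 g2 y and m :: real
      unfolding A_def by (simp only: blinfun.add_right blinfun.scaleR_right real_scaleR_def
          plus_blinfun.rep_eq scaleR_blinfun.rep_eq) (simp add: algebra_simps)
  qed (use key r0 in auto)
  then obtain y where y: "norm y < r" "\<forall>f\<in>F. A f y < \<eta>" by auto
  have "\<bar>blinfun_apply h y - blinfun_apply c h\<bar> < \<eta>" if "h \<in> H" for h
  proof -
    have "A h y < \<eta>" "A (-h) y < \<eta>" using y that unfolding F_def by auto
    then show ?thesis unfolding A_def by (simp add: blinfun.minus_right uminus_blinfun.rep_eq abs_less_iff)
  qed
  then show ?thesis using y by blast
qed




lemma topspace_wstar [simp]: "topspace wstar = UNIV"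
  unfolding wstar_def by (auto intro!: exI[of _ UNIV])

lemma cont_eval: "continuous_map wstar euclideanreal (\<lambda>\<phi>. blinfun_apply \<phi> f)"
  unfolding continuous_map_def
proof (intro conjI allI impI)
  fix U :: "real set" assume "openin euclideanreal U"
  hence "open U" by simp
  hence "{\<phi>. blinfun_apply \<phi> f \<in> U} \<in> {{\<phi>. blinfun_apply \<phi> f \<in> U} | f U. open U}" by blast
  hence "openin wstar {\<phi>. blinfun_apply \<phi> f \<in> U}"
    unfolding wstar_def by (rule topology_generated_by_Basis)
  then show "openin wstar {x \<in> topspace wstar. blinfun_apply x f \<in> U}" by simp
qed auto

lemma wstar_nbhd:
  assumes "openin wstar T" "c \<in> T"
  shows "\<exists>H \<eta>. finite H \<and> \<eta> > 0 \<and> (\<forall>\<phi>. (\<forall>h\<in>H. \<bar>blinfun_apply \<phi> h - blinfun_apply c h\<bar> < \<eta>) \<longrightarrow> \<phi> \<in> T)"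
proof -
  have g: "generate_topology_on {{\<phi>. blinfun_apply \<phi> f \<in> U} | f U. open U} T"
    using assms(1) unfolding wstar_def by (rule openin_topology_generated_by)
  have "\<forall>c\<in>T. \<exists>H \<eta>. finite H \<and> \<eta> > 0 \<and> (\<forall>\<phi>. (\<forall>h\<in>H. \<bar>blinfun_apply \<phi> h - blinfun_apply c h\<bar> < \<eta>) \<longrightarrow> \<phi> \<in> T)"
    using g
  proof (induction rule: generate_topology_on.induct)
    case Empty
    then show ?case by simp
  next
    case (Int a b)
    show ?case
    proof
      fix c assume c: "c \<in> a \<inter> b"
      obtain H1 e1 where 1: "finite H1" "e1 > 0" "\<forall>\<phi>. (\<forall>h\<in>H1. \<bar>blinfun_apply \<phi> h - blinfun_apply c h\<bar> < e1) \<longrightarrow> \<phi> \<in> a"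
        using Int.IH(1) c by blast
      obtain H2 e2 where 2: "finite H2" "e2 > 0" "\<forall>\<phi>. (\<forall>h\<in>H2. \<bar>blinfun_apply \<phi> h - blinfun_apply c h\<bar> < e2) \<longrightarrow> \<phi> \<in> b"
        using Int.IH(2) c by blast
      show "\<exists>H \<eta>. finite H \<and> \<eta> > 0 \<and> (\<forall>\<phi>. (\<forall>h\<in>H. \<bar>blinfun_apply \<phi> h - blinfun_apply c h\<bar> < \<eta>) \<longrightarrow> \<phi> \<in> a \<inter> b)"
        using 1 2 by (intro exI[of _ "H1 \<union> H2"] exI[of _ "min e1 e2"]) auto
    qed
  next
    case (UN K)
    show ?case
    proof
      fix c assume "c \<in> \<Union>K"
      then obtain k where k: "k \<in> K" "c \<in> k" by blast
      then obtain H e where "finite H" "e > 0" "\<forall>\<phi>. (\<forall>h\<in>H. \<bar>blinfun_apply \<phi> h - blinfun_apply c h\<bar> < e) \<longrightarrow> \<phi> \<in> k"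
        using UN.IH by blast
      then show "\<exists>H \<eta>. finite H \<and> \<eta> > 0 \<and> (\<forall>\<phi>. (\<forall>h\<in>H. \<bar>blinfun_apply \<phi> h - blinfun_apply c h\<bar> < \<eta>) \<longrightarrow> \<phi> \<in> \<Union>K)"
        using k by blast
    qed
  next
    case (Basis s)
    then obtain f U where s: "s = {\<phi>. blinfun_apply \<phi> f \<in> U}" "open U" by blast
    show ?case
    proof
      fix c assume "c \<in> s"
      then have "blinfun_apply c f \<in> U" using s by simp
      then obtain e where e: "e > 0" "ball (blinfun_apply c f) e \<subseteq> U" using s(2) open_contains_ball by blast
      show "\<exists>H \<eta>. finite H \<and> \<eta> > 0 \<and> (\<forall>\<phi>. (\<forall>h\<in>H. \<bar>blinfun_apply \<phi> h - blinfun_apply c h\<bar> < \<eta>) \<longrightarrow> \<phi> \<in> s)"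
      proof (intro exI[of _ "{f}"] exI[of _ e] conjI allI impI)
        fix \<phi> assume "\<forall>h\<in>{f}. \<bar>blinfun_apply \<phi> h - blinfun_apply c h\<bar> < e"
        hence "blinfun_apply \<phi> f \<in> ball (blinfun_apply c f) e" by (simp add: dist_real_def abs_minus_commute)
        then show "\<phi> \<in> s" using e s by auto
      qed (use e in auto)
    qed
  qed
  then show ?thesis using assms(2) by blast
qed




lemma canon_zero [simp]: "canon 0 = 0"
  by (rule blinfun_eqI) simp

lemma apply_le1: "norm f \<le> 1 \<Longrightarrow> \<bar>blinfun_apply f z\<bar> \<le> norm z"
proof -
  assume f: "norm f \<le> 1"
  have "\<bar>blinfun_apply f z\<bar> \<le> norm f * norm z" using norm_blinfun[of f z] by simp
  also have "\<dots> \<le> 1 * norm z" by (rule mult_right_mono) (use f in simp_all)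
  finally show ?thesis by simp
qed

theorem proposition3:
  fixes C :: "(('a::banach \<Rightarrow>\<^sub>L real) \<Rightarrow>\<^sub>L real) set"
  assumes "separable_space TYPE('a)"
    and "compactin wstar C" and "convex C"
    and "C \<inter> range canon = {}"
  shows "\<exists>Cn :: nat \<Rightarrow> 'a set.
           (\<forall>n. closed (Cn n) \<and> convex (Cn n)) \<and>
           (\<forall>n. Cn (Suc n) \<subseteq> Cn n) \<and>
           C \<subseteq> (\<Inter>n. wstar closure_of (canon ` Cn n)) \<and>
           (\<forall>x::'a. (\<lambda>n. infdist (canon x) (canon ` Cn n)) \<longlonglongrightarrow> infdist (canon x) C)"
proof (cases "C = {}")
  case True
  have "infdist (canon x) (canon ` UNIV) = 0" for x :: 'a
    by (rule infdist_zero) simp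
  then show ?thesis using True
    by (intro exI[of _ "\<lambda>n. UNIV"]) (simp add: infdist_def)
next
  case Cne: False
  note sep = assms(1) and cpt = assms(2) and cvx = assms(3)
  define \<sigma> where "\<sigma> f = Sup ((\<lambda>c. blinfun_apply c f) ` C)" for f
  have bdd: "bdd_above ((\<lambda>c. blinfun_apply c f) ` C)" for f
  proof -
    have "compactin euclideanreal ((\<lambda>c. blinfun_apply c f) ` C)"
      by (rule image_compactin[OF cpt cont_eval])
    then show ?thesis by (simp add: compact_imp_bounded bounded_imp_bdd_above)
  qed
  have le_sigma: "c \<in> C \<Longrightarrow> blinfun_apply c f \<le> \<sigma> f" for c f
    unfolding \<sigma>_def using bdd by (intro cSup_upper) auto
  define \<phi> where "\<phi> x = infdist (canon x) C" for x
  have M: "\<exists>f. norm f \<le> 1 \<and> blinfun_apply f x - \<sigma> f > \<phi> x - \<epsilon>" if eps: "\<epsilon> > 0" for x \<epsilon>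
  proof (rule ccontr)
    assume nM: "\<not> ?thesis"
    have s0: "\<sigma> 0 = 0" unfolding \<sigma>_def using Cne by simp
    have "\<phi> x \<ge> \<epsilon>"
    proof (rule ccontr)
      assume "\<not> \<phi> x \<ge> \<epsilon>"
      moreover have "blinfun_apply (0::'a \<Rightarrow>\<^sub>L real) x - \<sigma> 0 = 0" using s0 by simp
      moreover have "norm (0::'a \<Rightarrow>\<^sub>L real) \<le> 1" by simp
      ultimately have "norm (0::'a \<Rightarrow>\<^sub>L real) \<le> 1 \<and> \<phi> x - \<epsilon> < blinfun_apply (0::'a \<Rightarrow>\<^sub>L real) x - \<sigma> 0" by simp
      then show False using nM by blast
    qed
    define t where "t = \<phi> x - \<epsilon>/2"
    have t0: "t > 0" using \<open>\<phi> x \<ge> \<epsilon>\<close> eps unfolding t_def by simp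
    have hyp: "\<exists>c\<in>C. blinfun_apply g x - blinfun_apply c g < t" if g: "norm g \<le> 1" for g
    proof -
      have "blinfun_apply g x - t < \<sigma> g" using nM g eps unfolding t_def by force
      then obtain c where "c \<in> C" "blinfun_apply g x - t < blinfun_apply c g"
        unfolding \<sigma>_def using less_cSup_iff[OF _ bdd] Cne by force
      then show ?thesis by force
    qed
    define A where "A = (\<lambda>g (c::('a \<Rightarrow>\<^sub>L real) \<Rightarrow>\<^sub>L real). blinfun_apply g x - blinfun_apply c g)"
    define \<U> where "\<U> = (\<lambda>g. {c. blinfun_apply g x - blinfun_apply c g \<le> t}) ` cball 0 1"
    have closedU: "closedin wstar U" if UU: "U \<in> \<U>" for U
    proof -
      obtain g where U: "U = {c. blinfun_apply g x - blinfun_apply c g \<le> t}" using UU unfolding \<U>_def by blast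
      have "closedin wstar {c \<in> topspace wstar. blinfun_apply c g \<in> {blinfun_apply g x - t..}}"
        by (rule closedin_continuous_map_preimage[OF cont_eval]) simp
      moreover have "{c \<in> topspace wstar. blinfun_apply c g \<in> {blinfun_apply g x - t..}} = U"
        unfolding U by auto
      ultimately show ?thesis by simp
    qed
    have fip: "C \<inter> \<Inter>\<F> \<noteq> {}" if F: "finite \<F>" "\<F> \<subseteq> \<U>" for \<F>
    proof -
      obtain G where G: "G \<subseteq> cball 0 1" "finite G"
        "\<F> = (\<lambda>g. {c. blinfun_apply g x - blinfun_apply c g \<le> t}) ` G"
        using finite_subset_image[OF F(1) F(2)[unfolded \<U>_def]] by blast
      have hG: "convex hull G \<subseteq> cball 0 1" using G(1) by (simp add: hull_minimal convex_cball)
      have "\<exists>c\<in>C. \<forall>f\<in>G. A f c < t"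
      proof (rule fin_minimax[of G C A])
        show "finite G" by fact
        show "A g ((1-m) *\<^sub>R y1 + m *\<^sub>R y2) = (1-m) * A g y1 + m * A g y2" for g y1 y2 and m :: real
          unfolding A_def by (simp only: plus_blinfun.rep_eq scaleR_blinfun.rep_eq) (simp add: algebra_simps)
        show "A ((1-m) *\<^sub>R g1 + m *\<^sub>R g2) y = (1-m) * A g1 y + m * A g2 y" for g1 g2 y and m :: real
          unfolding A_def by (simp only: blinfun.add_right blinfun.scaleR_right real_scaleR_def
              plus_blinfun.rep_eq scaleR_blinfun.rep_eq) (simp add: algebra_simps)
        show "convex C" by fact
        show "C \<noteq> {}" by fact
        show "\<exists>y\<in>C. A g y < t" if "g \<in> convex hull G" for g
          using hyp[of g] that hG unfolding A_def by auto
      qed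
      then show ?thesis unfolding G(3) A_def by force
    qed
    obtain c where c: "c \<in> C" "\<And>g. norm g \<le> 1 \<Longrightarrow> blinfun_apply g x - blinfun_apply c g \<le> t"
    proof -
      have "C \<inter> \<Inter>\<U> \<noteq> {}"
        using cpt unfolding compactin_fip using closedU fip by blast
      then obtain c where "c \<in> C" "\<forall>g\<in>cball 0 1. blinfun_apply g x - blinfun_apply c g \<le> t"
        unfolding \<U>_def by auto
      then show ?thesis using that by (simp add: dist_norm)
    qed
    have "norm (canon x - c) \<le> t"
    proof (rule norm_blinfun_bound)
      show "0 \<le> t" using t0 by simp
      fix g :: "'a \<Rightarrow>\<^sub>L real"
      show "norm (blinfun_apply (canon x - c) g) \<le> t * norm g"
      proof (cases "g = 0")
        case True then show ?thesis by simp
      next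
        case False
        define g' where "g' = (1 / norm g) *\<^sub>R g"
        have n1: "norm g' = 1" "norm (-g') = 1" using False unfolding g'_def by auto
        have e: "blinfun_apply (canon x - c) g = norm g * (blinfun_apply g' x - blinfun_apply c g')"
          using False unfolding g'_def by (simp add: minus_blinfun.rep_eq blinfun.scaleR_right scaleR_blinfun.rep_eq algebra_simps)
        have "blinfun_apply g' x - blinfun_apply c g' \<le> t" using c(2)[of g'] n1 by simp
        moreover have "-(blinfun_apply g' x - blinfun_apply c g') \<le> t" using c(2)[of "-g'"] n1
          by (simp add: blinfun.minus_right uminus_blinfun.rep_eq)
        ultimately show ?thesis unfolding e using False by (simp add: abs_mult abs_le_iff mult.commute)
      qed
    qed
    then have "\<phi> x \<le> t" unfolding \<phi>_def using infdist_le[OF c(1), of "canon x"] by (simp add: dist_norm)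
    then show False unfolding t_def using eps by simp
  qed
  obtain D :: "'a set" where D: "countable D" "closure D = UNIV"
    using sep unfolding separable_space_def by blast
  have Dne: "D \<noteq> {}" using D(2) by auto
  define P where "P = D \<times> (UNIV :: nat set)"
  have Pc: "countable P" unfolding P_def using D(1) by simp
  have Pne: "P \<noteq> {}" unfolding P_def using Dne by simp
  have "\<forall>p\<in>P. \<exists>f. norm f \<le> 1 \<and> blinfun_apply f (fst p) - \<sigma> f > \<phi> (fst p) - 1 / real (Suc (snd p))"
    using M by simp
  then obtain fsel where fsel: "\<And>p. p \<in> P \<Longrightarrow> norm (fsel p) \<le> 1 \<and>
      blinfun_apply (fsel p) (fst p) - \<sigma> (fsel p) > \<phi> (fst p) - 1 / real (Suc (snd p))"
    by metis
  define fk where "fk k = fsel (from_nat_into P k)" for k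
  have fk1: "norm (fk k) \<le> 1" for k unfolding fk_def using fsel from_nat_into[OF Pne] by blast
  have canon_norm: "norm (canon x - canon y) \<le> norm (x - y)" for x y :: 'a
    by (simp add: canon_diff norm_canon_le)
  have Pk: "\<exists>k. blinfun_apply (fk k) x - \<sigma> (fk k) > \<phi> x - \<epsilon>" if eps: "\<epsilon> > 0" for x \<epsilon>
  proof -
    have e3: "\<epsilon>/3 > 0" using eps by simp
    have "x \<in> closure D" using D(2) by simp
    then obtain d where d: "d \<in> D" "dist d x < \<epsilon>/3"
      using e3 unfolding closure_approachable by blast
    obtain m0 :: nat where m0: "m0 > 0" "inverse (real m0) < \<epsilon>/3" using ex_inverse_of_nat_less[OF e3] by blast
    obtain m :: nat where m: "m0 = Suc m" using m0(1) gr0_implies_Suc by blast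
    obtain k where k: "from_nat_into P k = (d, m)"
    proof -
      have "(d, m) \<in> P" using d(1) unfolding P_def by simp
      then show ?thesis using from_nat_into_surj[OF Pc] that by blast
    qed
    have fkk: "fk k = fsel (d, m)" unfolding fk_def k by simp
    have dmP: "(d, m) \<in> P" using d unfolding P_def by simp
    have f2: "blinfun_apply (fk k) d - \<sigma> (fk k) > \<phi> d - 1 / real (Suc m)"
      using fsel[OF dmP] unfolding fkk by simp
    have i1: "\<bar>blinfun_apply (fk k) x - blinfun_apply (fk k) d\<bar> \<le> norm (x - d)"
      using apply_le1[OF fk1[of k], of "x - d"] by (simp only: blinfun.diff_right)
    have i2: "\<bar>\<phi> x - \<phi> d\<bar> \<le> norm (x - d)"
    proof -
      have "\<bar>\<phi> x - \<phi> d\<bar> \<le> dist (canon x) (canon d)"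
        unfolding \<phi>_def by (rule infdist_triangle_abs)
      also have "\<dots> \<le> norm (x - d)" unfolding dist_norm by (rule canon_norm)
      finally show ?thesis .
    qed
    have i3: "norm (x - d) < \<epsilon>/3" using d(2) by (simp only: dist_norm norm_minus_commute)
    have i4: "1 / real (Suc m) < \<epsilon>/3" using m0(2) unfolding m by (simp only: inverse_eq_divide)
    show ?thesis using f2 i1 i2 i3 i4 by (intro exI[of _ k]) linarith
  qed
  define Cn where "Cn n = {y. \<forall>k\<le>n. blinfun_apply (fk k) y \<le> \<sigma> (fk k) + 1 / real (Suc n)}" for n
  have closedCn: "closed (Cn n)" for n
  proof -
    have "Cn n = (\<Inter>k\<in>{..n}. {y. blinfun_apply (fk k) y \<le> \<sigma> (fk k) + 1 / real (Suc n)})"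
      unfolding Cn_def by auto
    moreover have "closed {y. blinfun_apply (fk k) y \<le> \<sigma> (fk k) + 1 / real (Suc n)}" for k
      by (intro closed_Collect_le continuous_intros linear_continuous_on blinfun.bounded_linear_right)
    ultimately show ?thesis by auto
  qed
  have convexCn: "convex (Cn n)" for n
    unfolding Cn_def convex_alt
  proof (intro ballI allI impI)
    fix y1 y2 and m :: real
    assume y: "y1 \<in> {y. \<forall>k\<le>n. blinfun_apply (fk k) y \<le> \<sigma> (fk k) + 1 / real (Suc n)}"
      "y2 \<in> {y. \<forall>k\<le>n. blinfun_apply (fk k) y \<le> \<sigma> (fk k) + 1 / real (Suc n)}" and m: "0 \<le> m \<and> m \<le> 1"
    show "(1 - m) *\<^sub>R y1 + m *\<^sub>R y2 \<in> {y. \<forall>k\<le>n. blinfun_apply (fk k) y \<le> \<sigma> (fk k) + 1 / real (Suc n)}"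
    proof (intro CollectI allI impI)
      fix k assume "k \<le> n"
      then have "blinfun_apply (fk k) y1 \<le> \<sigma> (fk k) + 1 / real (Suc n)"
        "blinfun_apply (fk k) y2 \<le> \<sigma> (fk k) + 1 / real (Suc n)" using y by auto
      then show "blinfun_apply (fk k) ((1 - m) *\<^sub>R y1 + m *\<^sub>R y2) \<le> \<sigma> (fk k) + 1 / real (Suc n)"
        using m by (simp add: blinfun.add_right blinfun.scaleR_right convex_bound_le)
    qed
  qed
  have nested: "Cn (Suc n) \<subseteq> Cn n" for n
  proof
    fix y assume "y \<in> Cn (Suc n)"
    moreover have "1 / real (Suc (Suc n)) \<le> 1 / real (Suc n)" by (simp add: frac_le)
    ultimately show "y \<in> Cn n" unfolding Cn_def
      by (smt (verit) le_SucI mem_Collect_eq)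
  qed
  have Appr: "\<exists>y\<in>Cn n. norm (y - x) < r \<and> (\<forall>h\<in>H. \<bar>blinfun_apply h y - blinfun_apply c h\<bar> < \<eta>)"
    if c: "c \<in> C" and H: "finite H" and eta: "\<eta> > 0" and r: "norm (c - canon x) < r" for c x H \<eta> r n
  proof -
    have fin: "finite (H \<union> fk ` {..n})" using H by simp
    have mp: "min \<eta> (1 / real (Suc n)) > 0" using eta by simp
    obtain z where z: "norm z < r" "\<forall>h\<in>H \<union> fk ` {..n}. \<bar>blinfun_apply h z - blinfun_apply (c - canon x) h\<bar> < min \<eta> (1 / real (Suc n))"
      using helly[OF fin mp r] by blast
    have e: "blinfun_apply h (x + z) - blinfun_apply c h = blinfun_apply h z - blinfun_apply (c - canon x) h" for h
      by (simp add: blinfun.add_right minus_blinfun.rep_eq)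
    have "x + z \<in> Cn n"
      unfolding Cn_def
    proof (intro CollectI allI impI)
      fix k assume "k \<le> n"
      then have "\<bar>blinfun_apply (fk k) (x + z) - blinfun_apply c (fk k)\<bar> < 1 / real (Suc n)"
        using z(2) unfolding e by auto
      then show "blinfun_apply (fk k) (x + z) \<le> \<sigma> (fk k) + 1 / real (Suc n)"
        using le_sigma[OF c, of "fk k"] by linarith
    qed
    moreover have "\<forall>h\<in>H. \<bar>blinfun_apply h (x + z) - blinfun_apply c h\<bar> < \<eta>"
      using z(2) unfolding e by auto
    ultimately show ?thesis using z(1) by (intro bexI[of _ "x + z"]) auto
  qed
  obtain c0 where c0: "c0 \<in> C" using Cne by blast
  have Cnne: "Cn n \<noteq> {}" for n
    using Appr[OF c0, of "{}" 1 0 "norm c0 + 1" n] by auto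
  have lower: "infdist (canon x) (canon ` Cn n) \<ge> blinfun_apply (fk k) x - \<sigma> (fk k) - 1 / real (Suc n)"
    if k: "k \<le> n" for x k n
  proof -
    have "dist (canon x) (canon y) \<ge> blinfun_apply (fk k) x - \<sigma> (fk k) - 1 / real (Suc n)" if y: "y \<in> Cn n" for y
    proof -
      have "blinfun_apply (fk k) y \<le> \<sigma> (fk k) + 1 / real (Suc n)" using y k unfolding Cn_def by auto
      moreover have "blinfun_apply (canon x - canon y) (fk k) \<le> norm (canon x - canon y)"
      proof -
        have "norm (canon x - canon y) * norm (fk k) \<le> norm (canon x - canon y) * 1"
          by (rule mult_left_mono) (use fk1[of k] in simp_all)
        then show ?thesis using apply_le[of "canon x - canon y" "fk k"] by simp
      qed
      ultimately show ?thesis by (simp add: dist_norm minus_blinfun.rep_eq)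
    qed
    note dl = this
    have ne: "canon ` Cn n \<noteq> {}" using Cnne[of n] by blast
    show ?thesis unfolding infdist_notempty[OF ne]
    proof (rule cINF_greatest[OF ne])
      fix a assume "a \<in> canon ` Cn n"
      then obtain y where "y \<in> Cn n" "a = canon y" by blast
      then show "blinfun_apply (fk k) x - \<sigma> (fk k) - 1 / real (Suc n) \<le> dist (canon x) a" using dl by blast
    qed
  qed
  have closure: "c \<in> wstar closure_of (canon ` Cn n)" if c: "c \<in> C" for c n
    unfolding in_closure_of
  proof (intro conjI allI impI)
    show "c \<in> topspace wstar" by simp
    fix T assume T: "c \<in> T \<and> openin wstar T"
    then obtain H \<eta> where H: "finite H" "\<eta> > 0"
      "\<And>\<psi>. (\<forall>h\<in>H. \<bar>blinfun_apply \<psi> h - blinfun_apply c h\<bar> < \<eta>) \<Longrightarrow> \<psi> \<in> T"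
      using wstar_nbhd[of T c] by blast
    have "norm (c - canon 0) < norm c + 1" by simp
    then obtain y where y: "y \<in> Cn n" "\<forall>h\<in>H. \<bar>blinfun_apply h y - blinfun_apply c h\<bar> < \<eta>"
      using Appr[OF c H(1) H(2)] by blast
    have "canon y \<in> T" using H(3)[of "canon y"] y(2) by simp
    then show "\<exists>z. z \<in> canon ` Cn n \<and> z \<in> T" using y(1) by blast
  qed
  have conv: "(\<lambda>n. infdist (canon x) (canon ` Cn n)) \<longlonglongrightarrow> infdist (canon x) C" for x
  proof (rule LIMSEQ_I)
    fix \<epsilon> :: real assume eps: "\<epsilon> > 0"
    have e2: "\<epsilon>/2 > 0" using eps by simp
    have "infdist (canon x) C < \<phi> x + \<epsilon>/2" unfolding \<phi>_def using eps by simp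
    then obtain c where c: "c \<in> C" "dist (canon x) c < \<phi> x + \<epsilon>/2"
      unfolding infdist_notempty[OF Cne] using cInf_lessD[of "(\<lambda>a. dist (canon x) a) ` C"] Cne by force
    have up: "infdist (canon x) (canon ` Cn n) < \<phi> x + \<epsilon>/2" for n
    proof -
      have "norm (c - canon x) < \<phi> x + \<epsilon>/2" using c(2) by (simp add: dist_norm norm_minus_commute)
      then obtain y where y: "y \<in> Cn n" "norm (y - x) < \<phi> x + \<epsilon>/2"
        using Appr[OF c(1), of "{}" 1 x _ n] by auto
      have "infdist (canon x) (canon ` Cn n) \<le> dist (canon x) (canon y)"
        using y(1) by (intro infdist_le) simp
      also have "\<dots> \<le> norm (x - y)" unfolding dist_norm by (rule canon_norm)
      also have "\<dots> = norm (y - x)" by (rule norm_minus_commute)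
      finally show ?thesis using y(2) by simp
    qed
    obtain k where k: "blinfun_apply (fk k) x - \<sigma> (fk k) > \<phi> x - \<epsilon>/2" using Pk[OF e2] by blast
    obtain N0 :: nat where N0: "N0 > 0" "inverse (real N0) < \<epsilon>/2" using ex_inverse_of_nat_less[OF e2] by blast
    show "\<exists>no. \<forall>n\<ge>no. norm (infdist (canon x) (canon ` Cn n) - infdist (canon x) C) < \<epsilon>"
    proof (intro exI[of _ "max k N0"] allI impI)
      fix n assume n: "max k N0 \<le> n"
      have "1 / real (Suc n) \<le> inverse (real N0)"
        using n N0(1) by (simp add: inverse_eq_divide frac_le)
      moreover have "infdist (canon x) (canon ` Cn n) \<ge> blinfun_apply (fk k) x - \<sigma> (fk k) - 1 / real (Suc n)"
        using n by (intro lower) simp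
      ultimately have "infdist (canon x) (canon ` Cn n) > \<phi> x - \<epsilon>" using k N0(2) by linarith
      moreover have "infdist (canon x) (canon ` Cn n) < \<phi> x + \<epsilon>" using up[of n] eps by linarith
      ultimately show "norm (infdist (canon x) (canon ` Cn n) - infdist (canon x) C) < \<epsilon>"
        unfolding \<phi>_def by (simp add: abs_less_iff)
    qed
  qed
  show ?thesis
    by (intro exI[of _ Cn] conjI allI) (use closedCn convexCn nested closure conv in auto)
qed


end
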